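(* Let $K=\{x\in\mathbb R^n: g_1(x)=\dots=g_m(x)=0,\ p_1(x)\ge0,\dots,p_t(x)\ge0\}$ be nonempty, with $g_i,p_j$ real polynomials, and let $d\ge1$. (i) If $K$ is compact, then for $f\in\mathbb R[x]_{\le d}$: $\delta_K(f)>0\iff f\in\operatorname{int}P_d(K)$, and $\delta_K(f)=0\iff f\in\partial P_d(K)$. (ii) If $K^h$ is closed at $\infty$, then for $f\in\mathbb R[x]_{\le d}$: $\delta^h_K(f)>0\iff f\in\operatorname{int}P_d(K)$, and $\delta^h_K(f)=0\iff f\in\partial P_d(K)$.
   Context: $\mathbb R[x]_{\le d}$: real polynomials in $x=(x_1,\dots,x_n)$ of degree $\le d$, with Euclidean topology on coefficients. $P_d(K)=\{f\in\mathbb R[x]_{\le d}: f(x)\ge0\ \forall x\in K\}$. With $\tilde x=(x_0,\dots,x_n)$: $f^h(\tilde x)=x_0^df(x/x_0)$ for $f\in\mathbb R[x]_{\le d}$, and each $g_i^h$, $p_j^h$ is the homogenization of $g_i$, $p_j$ in its own degree ($q^h=x_0^{\deg q}q(x/x_0)$). $K^h=\{\tilde x\in\mathbb R^{n+1}: g_i^h(\tilde x)=0\ \forall i,\ p_j^h(\tilde x)\ge0\ \forall j\}$ (depending on the chosen defining polynomials); $K^h$ is closed at $\infty$ if $K^h\cap\{x_0\ge0\}$ equals the closure of $K^h\cap\{x_0>0\}$. $\delta_K(f)=\min_{x\in K}f(x)$ and $\delta^h_K(f)=\min\{f^h(\tilde x):\tilde x\in K^h,\ \|\tilde x\|_2=1,\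 x_0\ge0\}$. *)

theory Defs
  imports "HOL-Analysis.Analysis"
begin

text \<open>Multivariate real polynomials in n variables (n = CARD('n)) are represented by their
coefficient functions on exponent vectors (monomials) alpha :: 'n => nat.
Points of R^n are vectors real^'n; points of R^(n+1) are pairs (x0, x) :: real \<times> (real^'n)
(whose norm is the Euclidean norm of R^(n+1)).\<close>

type_synonym 'n rpoly = "('n \<Rightarrow> nat) \<Rightarrow> real"

definition mdeg :: "('n::finite \<Rightarrow> nat) \<Rightarrow> nat" where
  "mdeg \<alpha> = (\<Sum>i\<in>UNIV. \<alpha> i)"

definition mono :: "('n::finite \<Rightarrow> nat) \<Rightarrow> real^'n \<Rightarrow> real" where
  "mono \<alpha> x = (\<Prod>i\<in>UNIV. (x $ i) ^ (\<alpha> i))"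

definition supp :: "'n rpoly \<Rightarrow> ('n \<Rightarrow> nat) set" where
  "supp c = {\<alpha>. c \<alpha> \<noteq> 0}"

definition is_poly :: "'n rpoly \<Rightarrow> bool" where
  "is_poly c \<longleftrightarrow> finite (supp c)"

definition peval :: "('n::finite) rpoly \<Rightarrow> real^'n \<Rightarrow> real" where
  "peval c x = (\<Sum>\<alpha>\<in>supp c. c \<alpha> * mono \<alpha> x)"

text \<open>Total degree (the zero polynomial gets degree 0).\<close>
definition pdeg :: "('n::finite) rpoly \<Rightarrow> nat" where
  "pdeg c = Max (insert 0 (mdeg ` supp c))"

text \<open>Homogenization in degree D: x0^D * c(x/x0), as a polynomial in (x0,x).\<close>
definition homog :: "nat \<Rightarrow> ('n::finite) rpoly \<Rightarrow> real \<times> (real^'n) \<Rightarrow> real" where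
  "homog D c z = (\<Sum>\<alpha>\<in>supp c. c \<alpha> * (fst z) ^ (D - mdeg \<alpha>) * mono \<alpha> (snd z))"

text \<open>R[x]_{<= d} as a subset of the coefficient space (product = Euclidean topology on coefficients).\<close>
definition polys_le :: "nat \<Rightarrow> ('n::finite) rpoly set" where
  "polys_le d = {c. \<forall>\<alpha>. c \<alpha> \<noteq> 0 \<longrightarrow> mdeg \<alpha> \<le> d}"

definition Kset :: "('n::finite) rpoly list \<Rightarrow> 'n rpoly list \<Rightarrow> (real^'n) set" where
  "Kset gs ps = {x. (\<forall>g\<in>set gs. peval g x = 0) \<and> (\<forall>p\<in>set ps. peval p x \<ge> 0)}"

definition Khset :: "('n::finite) rpoly list \<Rightarrow> 'n rpoly list \<Rightarrow> (real \<times> (real^'n)) set" where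
  "Khset gs ps = {z. (\<forall>g\<in>set gs. homog (pdeg g) g z = 0) \<and> (\<forall>p\<in>set ps. homog (pdeg p) p z \<ge> 0)}"

definition closed_at_infinity :: "(real \<times> (real^'n)) set \<Rightarrow> bool" where
  "closed_at_infinity Kh \<longleftrightarrow> Kh \<inter> {z. fst z \<ge> 0} = closure (Kh \<inter> {z. fst z > 0})"

definition Pd :: "nat \<Rightarrow> (real^'n) set \<Rightarrow> ('n::finite) rpoly set" where
  "Pd d K = {c \<in> polys_le d. \<forall>x\<in>K. peval c x \<ge> 0}"

definition deltaK :: "(real^'n) set \<Rightarrow> ('n::finite) rpoly \<Rightarrow> real" where
  "deltaK K f = Inf (peval f ` K)"

definition deltaKh :: "('n::finite) rpoly list \<Rightarrow> 'n rpoly list \<Rightarrow> nat \<Rightarrow> 'n rpoly \<Rightarrow> real" where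
  "deltaKh gs ps d f = Inf (homog d f ` {z \<in> Khset gs ps. norm z = 1 \<and> fst z \<ge> 0})"

end

theory Submission
  imports Defs
begin


lemma abstract_thm:
  fixes A :: "'a set" and m :: "'a \<Rightarrow> 'b::topological_space \<Rightarrow> real"
    and S :: "'b set" and P Q :: "('a \<Rightarrow> real) set"
  assumes fA: "finite A" and P: "P = {c. \<forall>\<alpha>. c \<alpha> \<noteq> 0 \<longrightarrow> \<alpha> \<in> A}"
    and cS: "compact S" and neS: "S \<noteq> {}"
    and cont: "\<And>\<alpha>. \<alpha>\<in>A \<Longrightarrow> continuous_on S (m \<alpha>)"
    and QP: "Q \<subseteq> P"
    and R1: "\<And>c. c\<in>P \<Longrightarrow> c \<in> Q \<longleftrightarrow> (\<forall>s\<in>S. 0 \<le> (\<Sum>\<alpha>\<in>A. c \<alpha> * m \<alpha> s))"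
    and R2: "\<And>s. s\<in>S \<Longrightarrow> \<exists>h\<in>P. 0 < (\<Sum>\<alpha>\<in>A. h \<alpha> * m \<alpha> s)"
    and c: "c \<in> P"
  shows "(Inf ((\<lambda>s. \<Sum>\<alpha>\<in>A. c \<alpha> * m \<alpha> s) ` S) > 0 \<longleftrightarrow> c \<in> top_of_set P interior_of Q) \<and>
         (Inf ((\<lambda>s. \<Sum>\<alpha>\<in>A. c \<alpha> * m \<alpha> s) ` S) = 0 \<longleftrightarrow> c \<in> top_of_set P frontier_of Q)"
proof -
  define E where "E = (\<lambda>c s. \<Sum>\<alpha>\<in>A. c \<alpha> * m \<alpha> s)"
  have contE: "continuous_on S (E c')" for c'
    unfolding E_def by (intro continuous_intros cont)
  have mn: "\<exists>s\<in>S. Inf (E c' ` S) = E c' s \<and> (\<forall>t\<in>S. E c' s \<le> E c' t)" for c'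
  proof -
    have "compact (E c' ` S)" by (rule compact_continuous_image[OF contE cS])
    then obtain s where s: "s \<in> S" "\<forall>t\<in>S. E c' s \<le> E c' t"
      using compact_attains_inf[of "E c' ` S"] neS by auto
    then have "Inf (E c' ` S) = E c' s" by (intro cInf_eq_minimum) auto
    with s show ?thesis by auto
  qed
  have lower: "t \<in> S \<Longrightarrow> Inf (E c' ` S) \<le> E c' t" for c' t
    using mn[of c'] by auto
  have Qiff: "c' \<in> P \<Longrightarrow> c' \<in> Q \<longleftrightarrow> Inf (E c' ` S) \<ge> 0" for c'
    using R1[of c'] mn[of c'] unfolding E_def by fastforce
  have closedQ: "closedin (top_of_set P) Q"
  proof -
    have "Q = P \<inter> (\<Inter>s\<in>S. {c'. 0 \<le> E c' s})"
      using R1 QP unfolding E_def by auto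
    moreover have "closed (\<Inter>s\<in>S. {c'. 0 \<le> E c' s})"
    proof (intro closed_INT ballI)
      fix s assume "s \<in> S"
      have "continuous_on UNIV (\<lambda>c'. E c' s)"
        unfolding E_def
        by (intro continuous_intros continuous_on_compose2[OF continuous_on_product_coordinates]) auto
      then show "closed {c'. 0 \<le> E c' s}"
        by (intro closed_Collect_le) (auto simp: continuous_on_eq_continuous_within)
    qed
    ultimately show ?thesis by (auto simp: closedin_closed)
  qed
  have int1: "c \<in> top_of_set P interior_of Q" if pos: "Inf (E c ` S) > 0"
  proof -
    define \<delta> where "\<delta> = Inf (E c ` S)"
    have "compact ((\<lambda>s. \<Sum>\<alpha>\<in>A. \<bar>m \<alpha> s\<bar>) ` S)"
      by (intro compact_continuous_image cS continuous_intros cont)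
    then have "bounded ((\<lambda>s. \<Sum>\<alpha>\<in>A. \<bar>m \<alpha> s\<bar>) ` S)" by (rule compact_imp_bounded)
    then obtain B where B0: "B > 0" "\<forall>y\<in>(\<lambda>s. \<Sum>\<alpha>\<in>A. \<bar>m \<alpha> s\<bar>) ` S. norm y \<le> B"
      by (auto simp: bounded_pos)
    then have B: "B > 0" "\<And>s. s\<in>S \<Longrightarrow> norm (\<Sum>\<alpha>\<in>A. \<bar>m \<alpha> s\<bar>) \<le> B" by auto
    define \<eta> where "\<eta> = \<delta> / (2*B)"
    have eta: "\<eta> > 0" using pos B unfolding \<eta>_def \<delta>_def by auto
    define T where "T = (\<Inter>\<alpha>\<in>A. (\<lambda>c'. c' \<alpha>) -` ball (c \<alpha>) \<eta>)"
    have oT: "open T" unfolding T_def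
      by (intro open_INT fA ballI open_vimage open_ball) auto
    have cT: "c \<in> T" unfolding T_def using eta by auto
    have "P \<inter> T \<subseteq> Q"
    proof
      fix c' assume c': "c' \<in> P \<inter> T"
      have "\<forall>s\<in>S. 0 \<le> E c' s"
      proof
        fix s assume s: "s \<in> S"
        have d: "\<bar>c' \<alpha> - c \<alpha>\<bar> < \<eta>" if "\<alpha> \<in> A" for \<alpha>
          using c' that unfolding T_def by (auto simp: dist_real_def abs_minus_commute)
        have "\<bar>E c' s - E c s\<bar> = \<bar>\<Sum>\<alpha>\<in>A. (c' \<alpha> - c \<alpha>) * m \<alpha> s\<bar>"
          unfolding E_def by (simp add: sum_subtractf[symmetric] algebra_simps)
        also have "\<dots> \<le> (\<Sum>\<alpha>\<in>A. \<bar>c' \<alpha> - c \<alpha>\<bar> * \<bar>m \<alpha> s\<bar>)"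
          by (rule order_trans[OF sum_abs]) (simp add: abs_mult)
        also have "\<dots> \<le> (\<Sum>\<alpha>\<in>A. \<eta> * \<bar>m \<alpha> s\<bar>)"
          by (intro sum_mono mult_right_mono) (auto intro: less_imp_le d)
        also have "\<dots> = \<eta> * (\<Sum>\<alpha>\<in>A. \<bar>m \<alpha> s\<bar>)" by (simp add: sum_distrib_left)
        also have "\<dots> \<le> \<eta> * B" using B(2)[OF s] eta by (intro mult_left_mono) auto
        also have "\<dots> = \<delta> / 2" unfolding \<eta>_def using B by auto
        finally have "\<bar>E c' s - E c s\<bar> \<le> \<delta> / 2" .
        moreover have "\<delta> \<le> E c s" unfolding \<delta>_def by (rule lower[OF s])
        ultimately show "0 \<le> E c' s" using pos unfolding \<delta>_def by linarith
      qed
      then show "c' \<in> Q" using R1 c' unfolding E_def by auto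
    qed
    then show ?thesis unfolding interior_of_def openin_open using oT cT c
      by (intro CollectI exI[of _ "P \<inter> T"]) auto
  qed
  have int2: "Inf (E c ` S) > 0" if ci: "c \<in> top_of_set P interior_of Q"
  proof (rule ccontr)
    assume npos: "\<not> Inf (E c ` S) > 0"
    obtain U where U: "openin (top_of_set P) U" "c \<in> U" "U \<subseteq> Q"
      using ci unfolding interior_of_def by auto
    obtain T where T: "open T" "U = P \<inter> T" using U(1) by (auto simp: openin_open)
    have "c \<in> Q" using U by auto
    then have "Inf (E c ` S) = 0" using Qiff c npos by auto
    then obtain s where s: "s \<in> S" "E c s = 0" using mn[of c] by auto
    obtain h where h: "h \<in> P" "0 < E h s" using R2[OF s(1)] unfolding E_def by auto
    define g where "g = (\<lambda>\<epsilon>::real. \<lambda>\<alpha>. c \<alpha> - \<epsilon> * h \<alpha>)"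
    have gc: "continuous_on UNIV g" unfolding g_def by (intro continuous_intros)
    have "open (g -` T)" using gc T(1) by (simp add: continuous_on_open_vimage)
    moreover have "0 \<in> g -` T" using T U by (auto simp: g_def)
    ultimately obtain e where e: "e > 0" "ball 0 e \<subseteq> g -` T"
      using open_contains_ball by blast
    have "e/2 \<in> ball 0 e" using e by (simp add: dist_real_def)
    then have "g (e/2) \<in> T" using e by blast
    moreover have "g (e/2) \<in> P" unfolding P g_def
    proof (clarify)
      fix \<alpha> assume ne: "c \<alpha> - e / 2 * h \<alpha> \<noteq> 0"
      show "\<alpha> \<in> A"
      proof (rule ccontr)
        assume "\<alpha> \<notin> A"
        then have "c \<alpha> = 0" "h \<alpha> = 0" using c h unfolding P by auto
        then show False using ne by simp
      qed
    qed
    ultimately have "g (e/2) \<in> Q" using T U by auto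
    then have "0 \<le> E (g (e/2)) s" using R1[OF \<open>g (e/2) \<in> P\<close>] s unfolding E_def by auto
    moreover have "E (g (e/2)) s = E c s - (e/2) * E h s"
      unfolding E_def g_def by (simp add: sum_subtractf sum_distrib_left algebra_simps)
    moreover have "(e/2) * E h s > 0" using e h by simp
    ultimately show False using s by linarith
  qed
  have fr: "top_of_set P frontier_of Q = Q - top_of_set P interior_of Q"
    unfolding frontier_of_def using closure_of_closedin[OF closedQ] by simp
  have iff1: "Inf (E c ` S) > 0 \<longleftrightarrow> c \<in> top_of_set P interior_of Q" using int1 int2 by blast
  have "c \<in> Q - top_of_set P interior_of Q \<longleftrightarrow> (Inf (E c ` S) \<ge> 0 \<and> \<not> Inf (E c ` S) > 0)"
    using Qiff[OF c] iff1 by blast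
  then have iff2: "Inf (E c ` S) = 0 \<longleftrightarrow> c \<in> top_of_set P frontier_of Q"
    unfolding fr by auto
  have eq: "(\<lambda>s. \<Sum>\<alpha>\<in>A. c \<alpha> * m \<alpha> s) = E c" by (simp add: E_def)
  show ?thesis unfolding eq using iff1 iff2 by blast
qed



lemma finite_Ad: "finite {\<alpha>::'n::finite \<Rightarrow> nat. mdeg \<alpha> \<le> d}"
proof (rule finite_subset[of _ "PiE UNIV (\<lambda>_. {0..d})"])
  show "{\<alpha>::'n \<Rightarrow> nat. mdeg \<alpha> \<le> d} \<subseteq> PiE UNIV (\<lambda>_. {0..d})"
  proof
    fix \<alpha> :: "'n \<Rightarrow> nat" assume "\<alpha> \<in> {\<alpha>. mdeg \<alpha> \<le> d}"
    then have "mdeg \<alpha> \<le> d" by simp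
    moreover have "\<alpha> i \<le> mdeg \<alpha>" for i unfolding mdeg_def
      by (rule member_le_sum) auto
    ultimately show "\<alpha> \<in> PiE UNIV (\<lambda>_. {0..d})" by auto (meson order_trans)
  qed
qed (intro finite_PiE, auto)

lemma supp_le: "c \<in> polys_le d \<Longrightarrow> supp c \<subseteq> {\<alpha>. mdeg \<alpha> \<le> d}"
  by (auto simp: polys_le_def supp_def)

lemma peval_eq: "c \<in> polys_le d \<Longrightarrow> peval c x = (\<Sum>\<alpha>\<in>{\<alpha>. mdeg \<alpha> \<le> d}. c \<alpha> * mono \<alpha> x)"
  unfolding peval_def
  by (rule sum.mono_neutral_left[OF finite_Ad supp_le]) (auto simp: supp_def)

lemma homog_eq: "c \<in> polys_le d \<Longrightarrow>
   homog d c z = (\<Sum>\<alpha>\<in>{\<alpha>. mdeg \<alpha> \<le> d}. c \<alpha> * (fst z ^ (d - mdeg \<alpha>) * mono \<alpha> (snd z)))"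
  unfolding homog_def mult.assoc
  by (rule sum.mono_neutral_left[OF finite_Ad supp_le]) (auto simp: supp_def)

lemma continuous_on_mono[continuous_intros]:
  "continuous_on S g \<Longrightarrow> continuous_on S (\<lambda>x. mono \<alpha> (g x))"
  unfolding mono_def by (intro continuous_intros)

lemma pdeg_ge: "is_poly q \<Longrightarrow> \<alpha> \<in> supp q \<Longrightarrow> mdeg \<alpha> \<le> pdeg q"
  unfolding pdeg_def is_poly_def by (intro Max_ge) auto

lemma mono_scale: "mono \<alpha> (t *\<^sub>R x) = t ^ mdeg \<alpha> * mono \<alpha> x"
  unfolding mono_def mdeg_def
  by (simp add: power_mult_distrib prod.distrib power_sum)

lemma homog_scale:
  assumes "\<forall>\<alpha>\<in>supp q. mdeg \<alpha> \<le> D"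
  shows "homog D q (t *\<^sub>R z) = t ^ D * homog D q z"
proof -
  have "q \<alpha> * (t * fst z) ^ (D - mdeg \<alpha>) * mono \<alpha> (t *\<^sub>R snd z)
      = t ^ D * (q \<alpha> * fst z ^ (D - mdeg \<alpha>) * mono \<alpha> (snd z))" if "\<alpha> \<in> supp q" for \<alpha>
  proof -
    have "t ^ (D - mdeg \<alpha>) * t ^ mdeg \<alpha> = t ^ D"
      using assms that by (simp add: power_add[symmetric])
    then show ?thesis by (simp add: mono_scale power_mult_distrib algebra_simps)
  qed
  then have "homog D q (t *\<^sub>R z) = (\<Sum>\<alpha>\<in>supp q. t ^ D * (q \<alpha> * fst z ^ (D - mdeg \<alpha>) * mono \<alpha> (snd z)))"
    unfolding homog_def by (intro sum.cong) auto
  then show ?thesis unfolding homog_def by (simp add: sum_distrib_left)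
qed

lemma homog_one: "homog D q (1, x) = peval q x"
  by (simp add: homog_def peval_def)

lemma homog_pos:
  assumes "\<forall>\<alpha>\<in>supp q. mdeg \<alpha> \<le> D" and "fst z > 0"
  shows "homog D q z = fst z ^ D * peval q (snd z /\<^sub>R fst z)"
proof -
  have "z = fst z *\<^sub>R (1, snd z /\<^sub>R fst z)" using assms(2) by (cases z) auto
  then have "homog D q z = homog D q (fst z *\<^sub>R (1, snd z /\<^sub>R fst z))" by simp
  also have "\<dots> = fst z ^ D * peval q (snd z /\<^sub>R fst z)"
    by (simp only: homog_scale[OF assms(1)] homog_one)
  finally show ?thesis .
qed

lemma Kh_to_K:
  assumes gs: "\<forall>g\<in>set gs. is_poly g" and ps: "\<forall>p\<in>set ps. is_poly p"
    and z: "z \<in> Khset gs ps" and pos: "fst z > 0"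
  shows "snd z /\<^sub>R fst z \<in> Kset gs ps"
proof -
  { fix g assume g: "g \<in> set gs"
    have "homog (pdeg g) g z = fst z ^ pdeg g * peval g (snd z /\<^sub>R fst z)"
      using gs g pos by (intro homog_pos) (auto intro: pdeg_ge)
    moreover have "homog (pdeg g) g z = 0" using z g by (auto simp: Khset_def)
    ultimately have "peval g (snd z /\<^sub>R fst z) = 0" using pos by simp }
  moreover
  { fix p assume p: "p \<in> set ps"
    have "homog (pdeg p) p z = fst z ^ pdeg p * peval p (snd z /\<^sub>R fst z)"
      using ps p pos by (intro homog_pos) (auto intro: pdeg_ge)
    moreover have "homog (pdeg p) p z \<ge> 0" using z p by (auto simp: Khset_def)
    ultimately have "peval p (snd z /\<^sub>R fst z) \<ge> 0" using pos zero_less_power[OF pos, of "pdeg p"]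
      by (auto simp: zero_le_mult_iff) }
  ultimately show ?thesis by (auto simp: Kset_def)
qed

lemma K_to_Kh:
  assumes gs: "\<forall>g\<in>set gs. is_poly g" and ps: "\<forall>p\<in>set ps. is_poly p"
    and x: "x \<in> Kset gs ps" and t: "t > 0"
  shows "t *\<^sub>R (1, x) \<in> Khset gs ps"
proof -
  { fix g assume g: "g \<in> set gs"
    have "homog (pdeg g) g (t *\<^sub>R (1, x)) = t ^ pdeg g * peval g x"
      using gs g by (subst homog_scale) (auto intro: pdeg_ge simp: homog_one)
    then have "homog (pdeg g) g (t *\<^sub>R (1, x)) = 0" using x g by (auto simp: Kset_def) }
  moreover
  { fix p assume p: "p \<in> set ps"
    have "homog (pdeg p) p (t *\<^sub>R (1, x)) = t ^ pdeg p * peval p x"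
      using ps p by (subst homog_scale) (auto intro: pdeg_ge simp: homog_one)
    then have "homog (pdeg p) p (t *\<^sub>R (1, x)) \<ge> 0" using x p t by (auto simp: Kset_def) }
  ultimately show ?thesis by (auto simp: Khset_def)
qed



lemma sum_delta_poly:
  fixes a :: "'n::finite \<Rightarrow> nat" and v :: real
  assumes "mdeg a \<le> d"
  shows "(\<Sum>\<alpha>\<in>{\<alpha>. mdeg \<alpha> \<le> d}. (if \<alpha> = a then v else 0) * m \<alpha>) = v * m a"
proof -
  have "(\<Sum>\<alpha>\<in>{\<alpha>. mdeg \<alpha> \<le> d}. (if \<alpha> = a then v else 0) * m \<alpha>)
      = (\<Sum>\<alpha>\<in>{\<alpha>. mdeg \<alpha> \<le> d}. (if \<alpha> = a then v * m \<alpha> else 0))"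
    by (intro sum.cong) auto
  also have "\<dots> = v * m a" by (subst sum.delta[OF finite_Ad]) (use assms in simp)
  finally show ?thesis .
qed

lemma part1:
  fixes gs ps :: "('n::finite) rpoly list" and d :: nat
  assumes cK: "compact (Kset gs ps)" and ne: "Kset gs ps \<noteq> {}" and f: "f \<in> polys_le d"
  shows "(deltaK (Kset gs ps) f > 0 \<longleftrightarrow>
                 f \<in> (top_of_set (polys_le d)) interior_of (Pd d (Kset gs ps))) \<and>
              (deltaK (Kset gs ps) f = 0 \<longleftrightarrow>
                 f \<in> (top_of_set (polys_le d)) frontier_of (Pd d (Kset gs ps)))"
proof -
  let ?A = "{\<alpha>::'n \<Rightarrow> nat. mdeg \<alpha> \<le> d}"
  let ?K = "Kset gs ps"
  have eq: "deltaK ?K f = Inf ((\<lambda>s. \<Sum>\<alpha>\<in>?A. f \<alpha> * mono \<alpha> s) ` ?K)"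
    unfolding deltaK_def using peval_eq[OF f] by simp
  have "?thesis"
    unfolding eq
  proof (rule abstract_thm[where A="?A" and m=mono])
    show "finite ?A" by (rule finite_Ad)
    show "polys_le d = {c. \<forall>\<alpha>. c \<alpha> \<noteq> 0 \<longrightarrow> \<alpha> \<in> ?A}" by (auto simp: polys_le_def)
    show "compact ?K" by fact
    show "?K \<noteq> {}" by fact
    show "continuous_on ?K (mono \<alpha>)" for \<alpha>
      using continuous_on_mono[OF continuous_on_id, of ?K \<alpha>] by simp
    show "Pd d ?K \<subseteq> polys_le d" by (auto simp: Pd_def)
    show "c \<in> Pd d ?K \<longleftrightarrow> (\<forall>s\<in>?K. 0 \<le> (\<Sum>\<alpha>\<in>?A. c \<alpha> * mono \<alpha> s))" if "c \<in> polys_le d" for c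
      using that by (auto simp: Pd_def peval_eq)
    show "\<exists>h\<in>polys_le d. 0 < (\<Sum>\<alpha>\<in>?A. h \<alpha> * mono \<alpha> s)" if "s \<in> ?K" for s
    proof (intro bexI)
      show "(\<lambda>\<alpha>::'n \<Rightarrow> nat. if \<alpha> = (\<lambda>_. 0) then 1 else 0) \<in> polys_le d"
        by (auto simp: polys_le_def mdeg_def)
      have "mdeg (\<lambda>_::'n. 0::nat) \<le> d" by (simp add: mdeg_def)
      then show "0 < (\<Sum>\<alpha>\<in>?A. (if \<alpha> = (\<lambda>_. 0) then 1 else 0) * mono \<alpha> s)"
        by (subst sum_delta_poly) (auto simp: mono_def)
    qed
    show "f \<in> polys_le d" by fact
  qed
  then show ?thesis .
qed

lemma cont_homog:
  fixes q :: "('n::finite) rpoly"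
  shows "continuous_on UNIV (homog D q)"
proof -
  have "continuous_on UNIV (\<lambda>z::real\<times>(real^'n::finite). \<Sum>\<alpha>\<in>supp q. q \<alpha> * fst z ^ (D - mdeg \<alpha>) * mono \<alpha> (snd z))"
    by (intro continuous_intros)
  then show ?thesis by (simp add: homog_def[abs_def])
qed

lemma closed_Kh: "closed (Khset gs ps)"
proof -
  have "Khset gs ps = (\<Inter>g\<in>set gs. {z. homog (pdeg g) g z = 0}) \<inter> (\<Inter>p\<in>set ps. {z. 0 \<le> homog (pdeg p) p z})"
    by (auto simp: Khset_def)
  moreover have "closed \<dots>"
    by (intro closed_Int closed_INT ballI closed_Collect_eq closed_Collect_le cont_homog continuous_on_const)
  ultimately show ?thesis by simp
qed

lemma mono_single: "mono (\<lambda>j. if j = i then d else 0) x = (x $ i) ^ d"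
proof -
  have "mono (\<lambda>j. if j = i then d else 0) x = (\<Prod>j\<in>UNIV. if j = i then (x $ j) ^ d else 1)"
    unfolding mono_def by (intro prod.cong) auto
  also have "\<dots> = (x $ i) ^ d" by (subst prod.delta) auto
  finally show ?thesis .
qed

lemma mdeg_single: "mdeg (\<lambda>j::'n::finite. if j = i then d else 0) = d"
proof -
  have "mdeg (\<lambda>j::'n. if j = i then d else 0) = (\<Sum>j\<in>UNIV. if j = i then d else 0)"
    unfolding mdeg_def by simp
  also have "\<dots> = d" by (subst sum.delta) auto
  finally show ?thesis .
qed

lemma part2:
  fixes gs ps :: "('n::finite) rpoly list" and d :: nat
  assumes gs: "\<forall>g\<in>set gs. is_poly g" and ps: "\<forall>p\<in>set ps. is_poly p"
    and ne: "Kset gs ps \<noteq> {}" and cl: "closed_at_infinity (Khset gs ps)" and f: "f \<in> polys_le d"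
  shows "(deltaKh gs ps d f > 0 \<longleftrightarrow>
                 f \<in> (top_of_set (polys_le d)) interior_of (Pd d (Kset gs ps))) \<and>
              (deltaKh gs ps d f = 0 \<longleftrightarrow>
                 f \<in> (top_of_set (polys_le d)) frontier_of (Pd d (Kset gs ps)))"
proof -
  let ?A = "{\<alpha>::'n \<Rightarrow> nat. mdeg \<alpha> \<le> d}"
  let ?K = "Kset gs ps"
  let ?Kh = "Khset gs ps"
  define S where "S = {z \<in> ?Kh. norm z = 1 \<and> fst z \<ge> 0}"
  define m where "m = (\<lambda>(\<alpha>::'n \<Rightarrow> nat) (z::real \<times> (real^'n)). fst z ^ (d - mdeg \<alpha>) * mono \<alpha> (snd z))"
  have homS: "homog d c z = (\<Sum>\<alpha>\<in>?A. c \<alpha> * m \<alpha> z)" if "c \<in> polys_le d" for c z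
    using homog_eq[OF that] by (simp add: m_def)
  have eq: "deltaKh gs ps d f = Inf ((\<lambda>s. \<Sum>\<alpha>\<in>?A. f \<alpha> * m \<alpha> s) ` S)"
    unfolding deltaKh_def S_def using homS[OF f] by simp
  have bnd: "\<forall>\<alpha>\<in>supp c. mdeg \<alpha> \<le> d" if "c \<in> polys_le d" for c
    using supp_le[OF that] by auto
  have normpt: "(1 / norm (1::real, x)) *\<^sub>R (1, x) \<in> S \<and> 1 / norm (1::real, x) > 0" if x: "x \<in> ?K" for x
  proof -
    have np: "norm (1::real, x) > 0" by (simp add: zero_prod_def)
    then have "(1 / norm (1::real, x)) *\<^sub>R (1, x) \<in> ?Kh"
      using K_to_Kh[OF gs ps x] by simp
    moreover have "norm ((1 / norm (1::real, x)) *\<^sub>R (1::real, x)) = 1"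
      using np by (subst norm_scaleR) (simp add: zero_prod_def)
    moreover have "fst ((1 / norm (1::real, x)) *\<^sub>R (1::real, x)) \<ge> 0" using np by simp
    ultimately show ?thesis using np unfolding S_def by auto
  qed
  have ?thesis
    unfolding eq
  proof (rule abstract_thm[where A="?A" and m=m])
    show "finite ?A" by (rule finite_Ad)
    show "polys_le d = {c. \<forall>\<alpha>. c \<alpha> \<noteq> 0 \<longrightarrow> \<alpha> \<in> ?A}" by (auto simp: polys_le_def)
    show "compact S"
    proof -
      have "S = ?Kh \<inter> sphere 0 1 \<inter> {z. 0 \<le> fst z}" unfolding S_def by auto
      moreover have "closed (?Kh \<inter> sphere 0 1 \<inter> {z. 0 \<le> fst z})"
        by (intro closed_Int closed_Kh closed_sphere closed_Collect_le continuous_intros)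
      moreover have "bounded (?Kh \<inter> sphere 0 1 \<inter> {z. 0 \<le> fst z})"
        by (rule bounded_subset[OF bounded_sphere]) auto
      ultimately show ?thesis by (simp add: compact_eq_bounded_closed)
    qed
    show "S \<noteq> {}" using ne normpt by blast
    show "continuous_on S (m \<alpha>)" for \<alpha>
      unfolding m_def by (intro continuous_intros)
    show "Pd d ?K \<subseteq> polys_le d" by (auto simp: Pd_def)
    show "c \<in> Pd d ?K \<longleftrightarrow> (\<forall>s\<in>S. 0 \<le> (\<Sum>\<alpha>\<in>?A. c \<alpha> * m \<alpha> s))" if c: "c \<in> polys_le d" for c
    proof
      assume cP: "c \<in> Pd d ?K"
      have "?Kh \<inter> {z. fst z > 0} \<subseteq> {z. 0 \<le> homog d c z}"
      proof
        fix z assume z: "z \<in> ?Kh \<inter> {z. fst z > 0}"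
        then have "snd z /\<^sub>R fst z \<in> ?K" using Kh_to_K[OF gs ps] by auto
        then have "peval c (snd z /\<^sub>R fst z) \<ge> 0" using cP by (auto simp: Pd_def)
        moreover have "homog d c z = fst z ^ d * peval c (snd z /\<^sub>R fst z)"
          using z by (intro homog_pos bnd c) auto
        ultimately show "z \<in> {z. 0 \<le> homog d c z}" using z by auto
      qed
      then have "closure (?Kh \<inter> {z. fst z > 0}) \<subseteq> {z. 0 \<le> homog d c z}"
        by (intro closure_minimal closed_Collect_le cont_homog continuous_on_const)
      then have "?Kh \<inter> {z. fst z \<ge> 0} \<subseteq> {z. 0 \<le> homog d c z}"
        using cl unfolding closed_at_infinity_def by simp
      then show "\<forall>s\<in>S. 0 \<le> (\<Sum>\<alpha>\<in>?A. c \<alpha> * m \<alpha> s)"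
        unfolding S_def using homS[OF c] by auto
    next
      assume H: "\<forall>s\<in>S. 0 \<le> (\<Sum>\<alpha>\<in>?A. c \<alpha> * m \<alpha> s)"
      have "peval c x \<ge> 0" if x: "x \<in> ?K" for x
      proof -
        define t where "t = 1 / norm (1::real, x)"
        have tS: "t *\<^sub>R (1, x) \<in> S" "t > 0" using normpt[OF x] unfolding t_def by auto
        have "homog d c (t *\<^sub>R (1, x)) = t ^ d * peval c x"
          by (simp only: homog_scale[OF bnd[OF c]] homog_one)
        moreover have "0 \<le> homog d c (t *\<^sub>R (1, x))" using H tS homS[OF c] by auto
        ultimately show ?thesis using tS(2) zero_less_power[OF tS(2), of d]
          by (auto simp: zero_le_mult_iff)
      qed
      then show "c \<in> Pd d ?K" using c by (auto simp: Pd_def)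
    qed
    show "\<exists>h\<in>polys_le d. 0 < (\<Sum>\<alpha>\<in>?A. h \<alpha> * m \<alpha> s)" if s: "s \<in> S" for s
    proof (cases "fst s > 0")
      case True
      show ?thesis
      proof (intro bexI)
        show "(\<lambda>\<alpha>::'n \<Rightarrow> nat. if \<alpha> = (\<lambda>_. 0) then 1 else 0) \<in> polys_le d"
          by (auto simp: polys_le_def mdeg_def)
        have "mdeg (\<lambda>_::'n. 0::nat) \<le> d" by (simp add: mdeg_def)
        then show "0 < (\<Sum>\<alpha>\<in>?A. (if \<alpha> = (\<lambda>_. 0) then 1 else 0) * m \<alpha> s)"
          using True by (subst sum_delta_poly) (auto simp: mono_def m_def mdeg_def)
      qed
    next
      case False
      then have f0: "fst s = 0" using s unfolding S_def by auto
      have "snd s \<noteq> 0"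
      proof
        assume "snd s = 0"
        then have "s = 0" using f0 by (simp add: prod_eq_iff)
        then show False using s unfolding S_def by auto
      qed
      then obtain i where i: "snd s $ i \<noteq> 0" by (auto simp: vec_eq_iff)
      define a where "a = (\<lambda>j::'n. if j = i then d else 0)"
      have ma: "mdeg a = d" unfolding a_def by (rule mdeg_single)
      show ?thesis
      proof (intro bexI)
        show "(\<lambda>\<alpha>. if \<alpha> = a then (snd s $ i) ^ d else 0) \<in> polys_le d"
          using ma by (auto simp: polys_le_def)
        have "m a s = (snd s $ i) ^ d" unfolding m_def a_def by (simp add: mono_single mdeg_single)
        moreover have "(snd s $ i) ^ d \<noteq> 0" using i by simp
        ultimately have "0 < (snd s $ i) ^ d * m a s"
          by (metis not_real_square_gt_zero)
        then show "0 < (\<Sum>\<alpha>\<in>?A. (if \<alpha> = a then (snd s $ i) ^ d else 0) * m \<alpha> s)"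
          using ma by (subst sum_delta_poly) auto
      qed
    qed
    show "f \<in> polys_le d" by fact
  qed
  then show ?thesis .
qed

theorem mainTheorem12:
  fixes gs ps :: "('n::finite) rpoly list" and d :: nat
  assumes "\<forall>g\<in>set gs. is_poly g" and "\<forall>p\<in>set ps. is_poly p"
    and "Kset gs ps \<noteq> {}" and "d \<ge> 1"
  shows "(compact (Kset gs ps) \<longrightarrow>
           (\<forall>f\<in>polys_le d.
              (deltaK (Kset gs ps) f > 0 \<longleftrightarrow>
                 f \<in> (top_of_set (polys_le d)) interior_of (Pd d (Kset gs ps))) \<and>
              (deltaK (Kset gs ps) f = 0 \<longleftrightarrow>
                 f \<in> (top_of_set (polys_le d)) frontier_of (Pd d (Kset gs ps)))))
       \<and> (closed_at_infinity (Khset gs ps) \<longrightarrow>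
           (\<forall>f\<in>polys_le d.
              (deltaKh gs ps d f > 0 \<longleftrightarrow>
                 f \<in> (top_of_set (polys_le d)) interior_of (Pd d (Kset gs ps))) \<and>
              (deltaKh gs ps d f = 0 \<longleftrightarrow>
                 f \<in> (top_of_set (polys_le d)) frontier_of (Pd d (Kset gs ps)))))"
  using part1[OF _ assms(3)] part2[OF assms(1,2,3)] by blast


end
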